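(* Let $\eta>0$, $\alpha\in(0,1)$, and run the generalized share algorithm with the mixing rule $\hat p_{j,t}=(1-\alpha)v_{j,t}+\alpha\,w_{j,t}/Z_t$ for $t\ge2$, where $w_{j,t}=\max_{s\le t}v_{j,s}$ and $Z_t=\sum_{i=1}^dw_{i,t}$. Then for all $T\ge1$, all loss vectors $\ell_1,\dots,\ell_T\in[0,1]^d$, and all $q_1,\dots,q_T\in\Delta_d$, \[ \sum_{t=1}^T\hat p_t^\top\ell_t-\sum_{t=1}^Tq_t^\top\ell_t\le\frac{n(q_1^T)\ln d}{\eta}+\frac\eta8T+\frac{m(q_1^T)}{\eta}\ln\frac T\alpha+\frac{T-m(q_1^T)-1}{\eta}\ln\frac1{1-\alpha}. \]
   Context: Let $d\ge1$ and $\Delta_d=\{q\in[0,1]^d:\sum_{i=1}^d q_i=1\}$. The generalized share algorithm with learning rate $\eta>0$ and mixing functions $\psi_t:[0,1]^{td}\to\Delta_d$ ($t\ge2$) works as follows: $\hat p_1=v_1=(1/d,\dots,1/d)$. At each round $t=1,2,\dots$ it predicts $\hat p_t=(\hat p_{1,t},\dots,\hat p_{d,t})\in\Delta_d$, observes a loss vector $\ell_t=(\ell_{1,t},\dots,\ell_{d,t})\in[0,1]^d$ (arbitrary), and suffers loss $\hat p_t^\top\ell_t$. It then forms the pre-weights $v_{j,t+1}=\hat p_{j,t}e^{-\eta\ell_{j,t}}/\sum_{i=1}^d\hat p_{i,t}e^{-\eta\ell_{i,t}}$ for $j=1,\dots,d$, sets $v_{t+1}=(v_{1,t+1},\dots,v_{d,t+1})$,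 and defines $\hat p_{t+1}=\psi_{t+1}(V_{t+1})$ where $V_{t+1}=[v_{i,s}]_{1\le i\le d,1\le s\le t+1}$ is the $d\times(t+1)$ matrix of all pre-weights so far. For $x,y\in\mathbb R_+^d$, $D_{\mathrm{TV}}(x,y)=\sum_{i:\,x_i\ge y_i}(x_i-y_i)$; for $u_1,\dots,u_T\in\mathbb R_+^d$ (with $u_t=(u_{1,t},\dots,u_{d,t})$), $m(u_1^T)=\sum_{t=2}^T D_{\mathrm{TV}}(u_t,u_{t-1})$ and $n(u_1^T)=\sum_{i=1}^d\max_{1\le t\le T}u_{i,t}$. *)

theory Defs
  imports "HOL-Analysis.Analysis"
begin

(* Experts are indexed by j \<in> {0..<d}; rounds by t \<ge> 1.
   Loss vectors: l t j = \<ell>_{j,t}.  Pre-weight matrix: V s j = v_{j,s} (s \<ge> 1).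
   A mixing function psi t V gives \<hat>p_t from columns V 1, ..., V t. *)

primrec gs_state :: "nat \<Rightarrow> real \<Rightarrow> (nat \<Rightarrow> (nat \<Rightarrow> nat \<Rightarrow> real) \<Rightarrow> nat \<Rightarrow> real)
    \<Rightarrow> (nat \<Rightarrow> nat \<Rightarrow> real) \<Rightarrow> nat \<Rightarrow> (nat \<Rightarrow> nat \<Rightarrow> real) \<times> (nat \<Rightarrow> real)" where
  "gs_state d \<eta> psi l 0 = ((\<lambda>s j. 1 / real d), (\<lambda>j. 1 / real d))"
| "gs_state d \<eta> psi l (Suc k) =
     (let (V, p) = gs_state d \<eta> psi l k;
          t = Suc k;
          v' = (\<lambda>j. p j * exp (- \<eta> * l t j) / (\<Sum>i<d. p i * exp (- \<eta> * l t i)));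
          V' = V(Suc t := v')
      in (V', psi (Suc t) V'))"

text \<open>State after round k: (pre-weights v_1..v_{k+1}, prediction p_{k+1}).\<close>

definition gs_pred :: "nat \<Rightarrow> real \<Rightarrow> (nat \<Rightarrow> (nat \<Rightarrow> nat \<Rightarrow> real) \<Rightarrow> nat \<Rightarrow> real)
    \<Rightarrow> (nat \<Rightarrow> nat \<Rightarrow> real) \<Rightarrow> nat \<Rightarrow> nat \<Rightarrow> real" where
  "gs_pred d \<eta> psi l t = snd (gs_state d \<eta> psi l (t - 1))"

definition share_max_mix :: "nat \<Rightarrow> real \<Rightarrow> nat \<Rightarrow> (nat \<Rightarrow> nat \<Rightarrow> real) \<Rightarrow> nat \<Rightarrow> real" where
  "share_max_mix d \<alpha> t V j =
     (let w = (\<lambda>i. Max ((\<lambda>s. V s i) ` {1..t}));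
          Z = (\<Sum>i<d. w i)
      in (1 - \<alpha>) * V t j + \<alpha> * w j / Z)"

definition prob_simplex :: "nat \<Rightarrow> (nat \<Rightarrow> real) \<Rightarrow> bool" where
  "prob_simplex d q \<longleftrightarrow> (\<forall>i<d. 0 \<le> q i \<and> q i \<le> 1) \<and> (\<Sum>i<d. q i) = 1"

definition D_TV :: "nat \<Rightarrow> (nat \<Rightarrow> real) \<Rightarrow> (nat \<Rightarrow> real) \<Rightarrow> real" where
  "D_TV d x y = (\<Sum>i\<in>{i. i < d \<and> x i \<ge> y i}. x i - y i)"

definition m_shift :: "nat \<Rightarrow> nat \<Rightarrow> (nat \<Rightarrow> nat \<Rightarrow> real) \<Rightarrow> real" where
  "m_shift d T u = (\<Sum>t=2..T. D_TV d (u t) (u (t - 1)))"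

definition n_max :: "nat \<Rightarrow> nat \<Rightarrow> (nat \<Rightarrow> nat \<Rightarrow> real) \<Rightarrow> real" where
  "n_max d T u = (\<Sum>i<d. Max ((\<lambda>t. u t i) ` {1..T}))"

end

theory Submission imports Defs "HOL-Probability.Hoeffding" begin
lemma exp_convex_pt:
  fixes h y :: real assumes "h \<ge> 0" "0 \<le> y" "y \<le> 1"
  shows "exp (h * y) \<le> 1 + y * (exp h - 1)"
proof -
  have "exp (h * ((1 - y) * 0 + y * 1)) \<le> (1 - y) * exp (h * 0) + y * exp (h * 1)"
    using convex_onD[OF convex_on_exp[OF assms(1)], of y 0 1] assms by simp
  thus ?thesis by (simp add: algebra_simps)
qed

lemma hoeff_discrete:
  fixes p x :: "nat \<Rightarrow> real" and h :: real
  assumes h: "h \<ge> 0" and p: "\<forall>i<d. 0 \<le> p i" and s: "(\<Sum>i<d. p i) = 1"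
    and x: "\<forall>i<d. 0 \<le> x i \<and> x i \<le> 1"
  shows "ln (\<Sum>i<d. p i * exp (- h * x i)) \<le> - h * (\<Sum>i<d. p i * x i) + h^2 / 8"
proof -
  define \<mu> where "\<mu> = (\<Sum>i<d. p i * (1 - x i))"
  have mu: "\<mu> = 1 - (\<Sum>i<d. p i * x i)"
    unfolding \<mu>_def by (simp add: algebra_simps sum_subtractf s)
  have mu0: "\<mu> \<ge> 0" unfolding \<mu>_def using p x by (intro sum_nonneg) auto
  have "(\<Sum>i<d. p i * exp (- h * x i)) \<le> (\<Sum>i<d. p i * (exp (-h) * (1 + (1 - x i) * (exp h - 1))))"
  proof (rule sum_mono)
    fix i assume "i \<in> {..<d}"
    hence i: "0 \<le> p i" "0 \<le> x i" "x i \<le> 1" using p x by auto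
    have "exp (- h * x i) = exp (-h) * exp (h * (1 - x i))" by (simp add: exp_add[symmetric] algebra_simps)
    also have "\<dots> \<le> exp (-h) * (1 + (1 - x i) * (exp h - 1))"
      using exp_convex_pt[OF h, of "1 - x i"] i by simp
    finally show "p i * exp (- h * x i) \<le> p i * (exp (-h) * (1 + (1 - x i) * (exp h - 1)))"
      using i by (intro mult_left_mono) auto
  qed
  also have "\<dots> = (\<Sum>i<d. exp (-h) * p i + exp (-h) * (exp h - 1) * (p i * (1 - x i)))"
    by (intro sum.cong) (auto simp: algebra_simps)
  also have "\<dots> = exp (-h) * (1 + \<mu> * (exp h - 1))"
    unfolding \<mu>_def sum.distrib sum_distrib_left[symmetric] s by (simp add: algebra_simps)
  finally have le: "(\<Sum>i<d. p i * exp (- h * x i)) \<le> exp (-h) * (1 + \<mu> * (exp h - 1))" .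
  have pos1: "1 + \<mu> * (exp h - 1) > 0" using mu0 h by (smt (verit) one_le_exp_iff mult_nonneg_nonneg)
  have spos: "(\<Sum>i<d. p i * exp (- h * x i)) > 0"
  proof -
    have "(\<Sum>i<d. p i * exp (- h)) \<le> (\<Sum>i<d. p i * exp (- h * x i))"
    proof (rule sum_mono)
      fix i assume "i \<in> {..<d}" thus "p i * exp (- h) \<le> p i * exp (- h * x i)"
        using p x h by (intro mult_left_mono) (auto simp: mult_left_le)
    qed
    moreover have "(\<Sum>i<d. p i * exp (- h)) = exp (-h)" by (simp add: sum_distrib_right[symmetric] s)
    ultimately show ?thesis by (smt (verit) exp_gt_zero)
  qed
  have "ln (\<Sum>i<d. p i * exp (- h * x i)) \<le> ln (exp (-h) * (1 + \<mu> * (exp h - 1)))"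
    using le spos by simp
  also have "\<dots> = -h + ln (1 + \<mu> * (exp h - 1))" using pos1 by (simp add: ln_mult)
  also have "\<dots> \<le> -h + (h * \<mu> + h^2/8)"
    using Hoeffdings_lemma_aux[OF h mu0] by simp
  finally show ?thesis unfolding mu by (simp add: algebra_simps)
qed

lemma abel_sum:
  fixes f g :: "nat \<Rightarrow> real"
  assumes "n \<ge> 1"
  shows "f 1 * g 1 + (\<Sum>t=2..n. (f t - f (t-1)) * g t) - f n * g (Suc n)
         = (\<Sum>t=1..n. f t * (g t - g (Suc t)))"
  using assms
proof (induction n)
  case 0 then show ?case by simp
next
  case (Suc n)
  show ?case
  proof (cases "n = 0")
    case True then show ?thesis by (simp add: algebra_simps)
  next
    case False
    hence IH: "f 1 * g 1 + (\<Sum>t=2..n. (f t - f (t-1)) * g t) - f n * g (Suc n)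
         = (\<Sum>t=1..n. f t * (g t - g (Suc t)))" using Suc by simp
    have "(\<Sum>t=2..Suc n. (f t - f (t-1)) * g t) = (\<Sum>t=2..n. (f t - f (t-1)) * g t) + (f (Suc n) - f n) * g (Suc n)"
      using False by (simp add: sum.cl_ivl_Suc)
    moreover have "(\<Sum>t=1..Suc n. f t * (g t - g (Suc t))) = (\<Sum>t=1..n. f t * (g t - g (Suc t))) + f (Suc n) * (g (Suc n) - g (Suc (Suc n)))"
      by (simp add: sum.cl_ivl_Suc)
    ultimately show ?thesis using IH by (simp add: algebra_simps)
  qed
qed

lemma telescope_neg:
  fixes g :: "nat \<Rightarrow> real"
  shows "(\<Sum>t=1..n. g t - g (Suc t)) = (if n = 0 then 0 else g 1 - g (Suc n))"
  by (induction n) (auto simp: sum.cl_ivl_Suc)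

lemma D_TV_alt: "D_TV d x y = (\<Sum>i<d. max (x i - y i) 0)"
proof -
  have "{i. i < d \<and> x i \<ge> y i} = {i\<in>{..<d}. y i \<le> x i}" by auto
  hence "D_TV d x y = (\<Sum>i\<in>{i\<in>{..<d}. y i \<le> x i}. x i - y i)" unfolding D_TV_def by simp
  also have "\<dots> = (\<Sum>i<d. if y i \<le> x i then x i - y i else 0)" by (rule sum.inter_filter) simp
  also have "\<dots> = (\<Sum>i<d. max (x i - y i) 0)" by (intro sum.cong) auto
  finally show ?thesis .
qed

locale gs_abs =
  fixes d T :: nat and \<eta> \<alpha> :: real and l q p v :: "nat \<Rightarrow> nat \<Rightarrow> real"
  assumes d: "d \<ge> 1" and eta: "\<eta> > 0" and a0: "0 < \<alpha>" and a1: "\<alpha> < 1" and T: "T \<ge> 1"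
    and lb: "\<forall>t\<in>{1..T}. \<forall>j<d. 0 \<le> l t j \<and> l t j \<le> 1"
    and qs: "\<forall>t\<in>{1..T}. prob_simplex d (q t)"
    and v1: "\<forall>j. v 1 j = 1 / real d" and p1: "\<forall>j. p 1 j = 1 / real d"
    and vrec: "\<forall>t\<in>{1..T}. \<forall>j. v (Suc t) j = p t j * exp (- \<eta> * l t j) / (\<Sum>i<d. p t i * exp (- \<eta> * l t i))"
    and prec: "\<forall>t\<in>{2..T}. \<forall>j. p t j = (1 - \<alpha>) * v t j
        + \<alpha> * Max ((\<lambda>s. v s j) ` {1..t}) / (\<Sum>i<d. Max ((\<lambda>s. v s i) ` {1..t}))"
begin

definition W where "W t j = Max ((\<lambda>s. v s j) ` {1..t})"
definition Z where "Z t = (\<Sum>i<d. W t i)"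
definition vg where "vg s \<longleftrightarrow> (\<forall>j<d. 0 < v s j) \<and> (\<Sum>j<d. v s j) = 1"
definition pg where "pg s \<longleftrightarrow> (\<forall>j<d. 0 < p s j) \<and> (\<Sum>j<d. p s j) = 1"

lemma prec': "t \<in> {2..T} \<Longrightarrow> p t j = (1 - \<alpha>) * v t j + \<alpha> * W t j / Z t"
  using prec unfolding W_def Z_def by auto

lemma W_ge: "s \<in> {1..t} \<Longrightarrow> v s j \<le> W t j"
  unfolding W_def by (intro Max_ge) auto

lemma W_ge_d: "t \<ge> 1 \<Longrightarrow> 1 / real d \<le> W t j"
  using W_ge[of 1 t j] v1 by auto

lemma W_pos: "t \<ge> 1 \<Longrightarrow> 0 < W t j"
  using W_ge_d[of t j] d by (smt (verit) divide_pos_pos of_nat_0_less_iff less_le_trans zero_less_one le_numeral_extra(2) not_one_le_zero)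

lemma Z_pos: "t \<ge> 1 \<Longrightarrow> 0 < Z t"
proof -
  assume t: "t \<ge> 1"
  have "0 \<in> {..<d}" using d by simp
  hence "{..<d} \<noteq> {}" by blast
  thus ?thesis unfolding Z_def using W_pos[OF t] by (intro sum_pos) auto
qed

lemma vg_step: assumes "t \<in> {1..T}" "pg t" shows "vg (Suc t)"
proof -
  define S where "S = (\<Sum>i<d. p t i * exp (- \<eta> * l t i))"
  have S: "S > 0" unfolding S_def using assms(2) d unfolding pg_def by (intro sum_pos) auto
  have v: "v (Suc t) j = p t j * exp (- \<eta> * l t j) / S" for j using vrec assms(1) S_def by auto
  have "\<forall>j<d. 0 < v (Suc t) j" using v S assms(2) unfolding pg_def by auto
  moreover have "(\<Sum>j<d. v (Suc t) j) = 1" unfolding v using S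
    by (simp add: sum_divide_distrib[symmetric] S_def)
  ultimately show ?thesis unfolding vg_def by simp
qed

lemma pg_step: assumes "t \<in> {2..T}" "\<forall>s\<in>{1..t}. vg s" shows "pg t"
proof -
  have t1: "t \<ge> 1" using assms by auto
  have vt: "vg t" using assms by auto
  have "\<forall>j<d. 0 < p t j"
  proof (intro allI impI)
    fix j assume j: "j < d"
    have "0 < (1 - \<alpha>) * v t j" using vt j a1 unfolding vg_def by auto
    moreover have "0 \<le> \<alpha> * W t j / Z t" using a0 W_pos[OF t1] Z_pos[OF t1] by (simp add: less_imp_le)
    ultimately show "0 < p t j" using prec'[OF assms(1)] by simp
  qed
  moreover have "(\<Sum>j<d. p t j) = 1"
  proof -
    have "(\<Sum>j<d. p t j) = (\<Sum>j<d. (1 - \<alpha>) * v t j + \<alpha> / Z t * W t j)"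
      using prec'[OF assms(1)] by (intro sum.cong) auto
    also have "\<dots> = (1 - \<alpha>) * (\<Sum>j<d. v t j) + \<alpha> / Z t * Z t"
      unfolding sum.distrib sum_distrib_left[symmetric] Z_def by simp
    also have "\<dots> = 1" using vt Z_pos[OF t1] unfolding vg_def by simp
    finally show ?thesis .
  qed
  ultimately show ?thesis unfolding pg_def by simp
qed

lemma good_aux: "n < T \<Longrightarrow> \<forall>s\<in>{1..Suc n}. vg s \<and> pg s"
proof (induction n)
  case 0
  have "(\<Sum>j<d. 1 / real d) = 1" using d by simp
  then show ?case using v1 p1 d unfolding vg_def pg_def by auto
next
  case (Suc n)
  hence IH: "\<forall>s\<in>{1..Suc n}. vg s \<and> pg s" by simp
  have v2: "vg (Suc (Suc n))" using vg_step[of "Suc n"] IH Suc.prems by auto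
  have "\<forall>s\<in>{1..Suc (Suc n)}. vg s" using IH v2 by (auto simp: le_Suc_eq)
  hence "pg (Suc (Suc n))" using pg_step[of "Suc (Suc n)"] Suc.prems by auto
  then show ?case using IH v2 by (auto simp: le_Suc_eq)
qed

lemma good_p: "t \<in> {1..T} \<Longrightarrow> pg t"
  using good_aux[of "t - 1"] by auto

lemma good_v: "t \<in> {1..Suc T} \<Longrightarrow> vg t"
proof -
  assume t: "t \<in> {1..Suc T}"
  show "vg t"
  proof (cases "t = Suc T")
    case True thus ?thesis using vg_step[of T] good_p[of T] T by auto
  next
    case False thus ?thesis using good_aux[of "t - 1"] t by auto
  qed
qed

lemma v_pos: "t \<in> {1..Suc T} \<Longrightarrow> j < d \<Longrightarrow> 0 < v t j"
  using good_v unfolding vg_def by auto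

lemma p_pos: "t \<in> {1..T} \<Longrightarrow> j < d \<Longrightarrow> 0 < p t j"
  using good_p unfolding pg_def by auto

lemma v_le1: assumes "t \<in> {1..Suc T}" "j < d" shows "v t j \<le> 1"
proof -
  have "v t j \<le> (\<Sum>i<d. v t i)"
    using assms v_pos[OF assms(1)] by (intro member_le_sum) (auto simp: less_imp_le)
  thus ?thesis using good_v[OF assms(1)] unfolding vg_def by simp
qed

lemma W_le1: assumes "t \<in> {1..Suc T}" "j < d" shows "W t j \<le> 1"
  unfolding W_def using assms v_le1 by (subst Max_le_iff) auto

lemma W_mono: "1 \<le> t \<Longrightarrow> t \<le> t' \<Longrightarrow> W t j \<le> W t' j"
  unfolding W_def by (intro Max_mono) auto

lemma Z_le: assumes "t \<in> {1..Suc T}" shows "Z t \<le> real t"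
proof -
  have "Z t \<le> (\<Sum>i<d. \<Sum>s\<in>{1..t}. v s i)"
    unfolding Z_def
  proof (rule sum_mono)
    fix i assume i: "i \<in> {..<d}"
    have all: "\<forall>s\<in>{1..t}. v s i \<le> (\<Sum>s\<in>{1..t}. v s i)"
    proof
      fix s assume s: "s \<in> {1..t}"
      have nn: "\<forall>x\<in>{1..t} - {s}. 0 \<le> v x i" using i assms v_pos[of _ i] by (auto simp: less_imp_le)
      show "v s i \<le> (\<Sum>s\<in>{1..t}. v s i)" by (rule member_le_sum[OF s]) (use nn in auto)
    qed
    show "W t i \<le> (\<Sum>s\<in>{1..t}. v s i)"
      unfolding W_def using all assms by (subst Max_le_iff) auto
  qed
  also have "\<dots> = (\<Sum>s\<in>{1..t}. \<Sum>i<d. v s i)" by (rule sum.swap)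
  also have "\<dots> = (\<Sum>s\<in>{1..t}. 1)" using assms good_v unfolding vg_def by (intro sum.cong) auto
  finally show ?thesis by simp
qed

end

context gs_abs begin

lemma dne: "{..<d} \<noteq> {}"
proof -
  have "0 \<in> {..<d}" using d by simp
  thus ?thesis by blast
qed

lemma q_nn: "t \<in> {1..T} \<Longrightarrow> j < d \<Longrightarrow> 0 \<le> q t j \<and> q t j \<le> 1"
  using qs unfolding prob_simplex_def by auto

lemma q_sum: "t \<in> {1..T} \<Longrightarrow> (\<Sum>j<d. q t j) = 1"
  using qs unfolding prob_simplex_def by auto

lemma round:
  assumes t: "t \<in> {1..T}"
  shows "(\<Sum>j<d. p t j * l t j) - (\<Sum>j<d. q t j * l t j)
         \<le> (\<Sum>j<d. q t j * (ln (v (Suc t) j) - ln (p t j))) / \<eta> + \<eta> / 8"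
proof -
  define S where "S = (\<Sum>i<d. p t i * exp (- \<eta> * l t i))"
  have S: "S > 0" unfolding S_def using p_pos[OF t] dne by (intro sum_pos) auto
  have lnv: "ln (v (Suc t) j) - ln (p t j) = - \<eta> * l t j - ln S" if j: "j < d" for j
  proof -
    have "v (Suc t) j = p t j * exp (- \<eta> * l t j) / S" using vrec t S_def by auto
    thus ?thesis using p_pos[OF t j] S by (simp add: ln_div ln_mult)
  qed
  have "(\<Sum>j<d. q t j * (ln (v (Suc t) j) - ln (p t j))) = (\<Sum>j<d. q t j * (- \<eta> * l t j) - q t j * ln S)"
  proof (intro sum.cong refl)
    fix j assume "j \<in> {..<d}"
    hence "ln (v (Suc t) j) - ln (p t j) = - \<eta> * l t j - ln S" using lnv by simp
    thus "q t j * (ln (v (Suc t) j) - ln (p t j)) = q t j * (- \<eta> * l t j) - q t j * ln S"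
      by (simp add: right_diff_distrib)
  qed
  also have "\<dots> = - \<eta> * (\<Sum>j<d. q t j * l t j) - ln S"
    by (simp add: sum_subtractf sum_distrib_left[symmetric] sum_distrib_right[symmetric] q_sum[OF t] algebra_simps sum_negf)
  finally have X: "(\<Sum>j<d. q t j * (ln (v (Suc t) j) - ln (p t j))) = - \<eta> * (\<Sum>j<d. q t j * l t j) - ln S" .
  have H: "ln S \<le> - \<eta> * (\<Sum>j<d. p t j * l t j) + \<eta>^2 / 8"
    unfolding S_def using hoeff_discrete[of \<eta> d "p t" "l t"] eta good_p[OF t] lb t
    unfolding pg_def by (auto simp: less_imp_le)
  define P where "P = (\<Sum>j<d. p t j * l t j)"
  define Q where "Q = (\<Sum>j<d. q t j * l t j)"
  have "(- \<eta> * Q - ln S) / \<eta> \<ge> (\<eta> * P - \<eta> * Q - \<eta>^2/8) / \<eta>"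
    using H eta unfolding P_def by (intro divide_right_mono) auto
  also have "(\<eta> * P - \<eta> * Q - \<eta>^2/8) / \<eta> = P - Q - \<eta>/8"
    using eta by (simp add: field_simps power2_eq_square)
  finally show ?thesis unfolding X P_def[symmetric] Q_def[symmetric] by simp
qed

definition L where "L t j = - ln (W t j)"
definition c1 where "c1 = - ln (1 - \<alpha>)"

lemma W1: "W 1 j = 1 / real d"
  unfolding W_def using v1 by simp

lemma step_first: "j < d \<Longrightarrow> - (q 1 j * ln (p 1 j)) = q 1 j * L 1 j"
  unfolding L_def W1 using p1 by simp

lemma step_mid:
  assumes t: "t \<in> {2..T}" and j: "j < d"
  shows "- (q t j * ln (p t j)) + q (t-1) j * ln (v t j)
     \<le> min (q t j) (q (t-1) j) * c1 + max (q t j - q (t-1) j) 0 * ln (real T / \<alpha>)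
        + (q t j - q (t-1) j) * L t j"
proof -
  have t1: "t \<ge> 1" "t \<in> {1..T}" "t - 1 \<in> {1..T}" "t \<in> {1..Suc T}" using t by auto
  define a where "a = q (t-1) j"
  define b where "b = q t j"
  have a: "0 \<le> a" and b: "0 \<le> b" using q_nn[OF t1(2) j] q_nn[OF t1(3) j] a_def b_def by auto
  define x where "x = (1 - \<alpha>) * v t j"
  define y where "y = \<alpha> * W t j / Z t"
  have vpos: "0 < v t j" using v_pos[OF t1(4) j] .
  have Wpos: "0 < W t j" using W_pos[OF t1(1)] .
  have Zpos: "0 < Z t" using Z_pos[OF t1(1)] .
  have x: "0 < x" unfolding x_def using vpos a1 by simp
  have y: "0 < y" unfolding y_def using Wpos Zpos a0 by simp
  have pe: "p t j = x + y" using prec'[OF t] x_def y_def by simp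
  have lpx: "ln x \<le> ln (p t j)" using x y pe by simp
  have lpy: "ln y \<le> ln (p t j)" using x y pe by simp
  have lx: "ln x = - c1 + ln (v t j)" unfolding x_def c1_def using vpos a1 by (simp add: ln_mult)
  have ZT: "Z t \<le> real T" using Z_le[OF t1(4)] t by auto
  have ly: "ln y \<ge> - ln (real T / \<alpha>) - L t j"
  proof -
    have "ln y = ln \<alpha> + ln (W t j) - ln (Z t)" unfolding y_def using a0 Wpos Zpos by (simp add: ln_div ln_mult)
    moreover have "ln (Z t) \<le> ln (real T)" using ZT Zpos by simp
    moreover have "ln (real T / \<alpha>) = ln (real T) - ln \<alpha>" using T a0 by (simp add: ln_div)
    ultimately show ?thesis unfolding L_def by simp
  qed
  have lvW: "ln (v t j) \<le> ln (W t j)" using W_ge[of t t j] t1 vpos by simp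
  show ?thesis
  proof (cases "a \<le> b")
    case True
    have "a * ln x \<le> a * ln (p t j)" using lpx a by (rule mult_left_mono)
    moreover have "(b - a) * ln y \<le> (b - a) * ln (p t j)" using lpy True by (intro mult_left_mono) auto
    moreover have "(b - a) * (- ln (real T / \<alpha>) - L t j) \<le> (b - a) * ln y" using ly True by (intro mult_left_mono) auto
    moreover have "min b a = a" "max (b - a) 0 = b - a" using True by auto
    ultimately show ?thesis unfolding a_def[symmetric] b_def[symmetric] lx by (simp add: algebra_simps)
  next
    case False
    have "b * ln x \<le> b * ln (p t j)" using lpx b by (rule mult_left_mono)
    moreover have "(a - b) * ln (v t j) \<le> (a - b) * ln (W t j)" using lvW False by (intro mult_left_mono) auto
    moreover have "min b a = b" "max (b - a) 0 = 0" using False by auto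
    ultimately show ?thesis unfolding a_def[symmetric] b_def[symmetric] lx L_def by (simp add: algebra_simps)
  qed
qed

lemma step_last: "j < d \<Longrightarrow> q T j * ln (v (Suc T) j) \<le> - (q T j * L (Suc T) j)"
proof -
  assume j: "j < d"
  have "ln (v (Suc T) j) \<le> ln (W (Suc T) j)"
    using W_ge[of "Suc T" "Suc T" j] v_pos[of "Suc T" j] j by simp
  thus ?thesis unfolding L_def using q_nn[of T j] T j by (simp add: mult_left_mono)
qed

lemma abel_bound:
  assumes j: "j < d"
  shows "(\<Sum>t=1..T. q t j * (L t j - L (Suc t) j)) \<le> Max ((\<lambda>t. q t j) ` {1..T}) * ln (real d)"
proof -
  define M where "M = Max ((\<lambda>t. q t j) ` {1..T})"
  have qM: "q t j \<le> M" if "t \<in> {1..T}" for t unfolding M_def using that by (intro Max_ge) auto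
  have M0: "0 \<le> M" using qM[of 1] q_nn[of 1 j] T j by force
  have Ldec: "0 \<le> L t j - L (Suc t) j" if "t \<ge> 1" for t
    unfolding L_def using W_mono[of t "Suc t" j] W_pos[of t j] that by simp
  have "(\<Sum>t=1..T. q t j * (L t j - L (Suc t) j)) \<le> (\<Sum>t=1..T. M * (L t j - L (Suc t) j))"
    using qM Ldec by (intro sum_mono mult_right_mono) auto
  also have "\<dots> = M * (L 1 j - L (Suc T) j)"
  proof -
    have "(\<Sum>t=1..T. L t j - L (Suc t) j) = L 1 j - L (Suc T) j"
      using telescope_neg[of "\<lambda>t. L t j" T] T by simp
    thus ?thesis by (simp add: sum_distrib_left[symmetric])
  qed
  also have "\<dots> \<le> M * ln (real d)"
  proof -
    have "L 1 j = ln (real d)" unfolding L_def W1 using d by (simp add: ln_div)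
    moreover have "0 \<le> L (Suc T) j" unfolding L_def using W_le1[of "Suc T" j] W_pos[of "Suc T" j] j by simp
    ultimately show ?thesis using M0 by (intro mult_left_mono) auto
  qed
  finally show ?thesis unfolding M_def .
qed

end

context gs_abs begin

lemma A_bound:
  assumes j: "j < d"
  shows "(\<Sum>t=1..T. q t j * (ln (v (Suc t) j) - ln (p t j)))
    \<le> (\<Sum>t=2..T. min (q t j) (q (t-1) j) * c1 + max (q t j - q (t-1) j) 0 * ln (real T / \<alpha>))
       + Max ((\<lambda>t. q t j) ` {1..T}) * ln (real d)"
proof -
  define g where "g t = q (t-1) j * ln (v t j)" for t
  have s1: "(\<Sum>t=1..T. q t j * ln (v (Suc t) j)) = (\<Sum>t=2..T. g t) + g (Suc T)"
  proof -
    have "(\<Sum>t=1..T. q t j * ln (v (Suc t) j)) = (\<Sum>t=1..T. g (Suc t))" unfolding g_def by simp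
    also have "\<dots> = (\<Sum>t=Suc 1..Suc T. g t)" by (rule sum.shift_bounds_cl_Suc_ivl[symmetric])
    also have "\<dots> = (\<Sum>t=2..T. g t) + g (Suc T)" using T by (simp add: sum.cl_ivl_Suc numeral_2_eq_2)
    finally show ?thesis .
  qed
  have s2: "(\<Sum>t=1..T. q t j * ln (p t j)) = q 1 j * ln (p 1 j) + (\<Sum>t=2..T. q t j * ln (p t j))"
    using T by (simp add: sum.atLeast_Suc_atMost numeral_2_eq_2)
  have "(\<Sum>t=1..T. q t j * (ln (v (Suc t) j) - ln (p t j)))
     = (\<Sum>t=1..T. q t j * ln (v (Suc t) j)) - (\<Sum>t=1..T. q t j * ln (p t j))"
    by (simp add: right_diff_distrib sum_subtractf)
  also have "\<dots> = - (q 1 j * ln (p 1 j)) + (\<Sum>t=2..T. - (q t j * ln (p t j)) + q (t-1) j * ln (v t j))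
       + q T j * ln (v (Suc T) j)"
    unfolding s1 s2 by (simp add: g_def sum.distrib sum_negf sum_subtractf)
  also have "\<dots> \<le> q 1 j * L 1 j + (\<Sum>t=2..T. min (q t j) (q (t-1) j) * c1 + max (q t j - q (t-1) j) 0 * ln (real T / \<alpha>)
        + (q t j - q (t-1) j) * L t j) - q T j * L (Suc T) j"
  proof -
    have "(\<Sum>t=2..T. - (q t j * ln (p t j)) + q (t-1) j * ln (v t j)) \<le> (\<Sum>t=2..T. min (q t j) (q (t-1) j) * c1 + max (q t j - q (t-1) j) 0 * ln (real T / \<alpha>)
        + (q t j - q (t-1) j) * L t j)" using step_mid[OF _ j] by (intro sum_mono) auto
    thus ?thesis using step_first[OF j] step_last[OF j] by linarith
  qed
  also have "\<dots> = (\<Sum>t=2..T. min (q t j) (q (t-1) j) * c1 + max (q t j - q (t-1) j) 0 * ln (real T / \<alpha>))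
      + (q 1 j * L 1 j + (\<Sum>t=2..T. (q t j - q (t-1) j) * L t j) - q T j * L (Suc T) j)"
    by (simp add: sum.distrib)
  also have "(q 1 j * L 1 j + (\<Sum>t=2..T. (q t j - q (t-1) j) * L t j) - q T j * L (Suc T) j)
      = (\<Sum>t=1..T. q t j * (L t j - L (Suc t) j))"
    using abel_sum[of T "\<lambda>t. q t j" "\<lambda>t. L t j"] T by simp
  also have "\<dots> \<le> Max ((\<lambda>t. q t j) ` {1..T}) * ln (real d)" by (rule abel_bound[OF j])
  finally show ?thesis by simp
qed

lemma min_sum: assumes t: "t \<in> {2..T}"
  shows "(\<Sum>j<d. min (q t j) (q (t-1) j)) = 1 - D_TV d (q t) (q (t-1))"
proof -
  have "(\<Sum>j<d. min (q t j) (q (t-1) j)) = (\<Sum>j<d. q t j - max (q t j - q (t-1) j) 0)"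
    by (intro sum.cong) auto
  also have "\<dots> = 1 - D_TV d (q t) (q (t-1))"
    using t by (simp add: sum_subtractf D_TV_alt q_sum)
  finally show ?thesis .
qed

lemma total_R:
  "(\<Sum>t=1..T. \<Sum>j<d. q t j * (ln (v (Suc t) j) - ln (p t j)))
    \<le> n_max d T q * ln (real d) + m_shift d T q * ln (real T / \<alpha>) + (real T - 1 - m_shift d T q) * c1"
proof -
  have "(\<Sum>t=1..T. \<Sum>j<d. q t j * (ln (v (Suc t) j) - ln (p t j)))
      = (\<Sum>j<d. \<Sum>t=1..T. q t j * (ln (v (Suc t) j) - ln (p t j)))" by (rule sum.swap)
  also have "\<dots> \<le> (\<Sum>j<d. (\<Sum>t=2..T. min (q t j) (q (t-1) j) * c1 + max (q t j - q (t-1) j) 0 * ln (real T / \<alpha>))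
       + Max ((\<lambda>t. q t j) ` {1..T}) * ln (real d))"
    using A_bound by (intro sum_mono) auto
  also have "\<dots> = (\<Sum>t=2..T. (\<Sum>j<d. min (q t j) (q (t-1) j)) * c1 + (\<Sum>j<d. max (q t j - q (t-1) j) 0) * ln (real T / \<alpha>))
       + n_max d T q * ln (real d)"
    unfolding sum.distrib n_max_def sum_distrib_right by (simp add: sum.swap[of _ "{2..T}"])
  also have "(\<Sum>t=2..T. (\<Sum>j<d. min (q t j) (q (t-1) j)) * c1 + (\<Sum>j<d. max (q t j - q (t-1) j) 0) * ln (real T / \<alpha>))
      = (\<Sum>t=2..T. c1 - D_TV d (q t) (q (t-1)) * c1 + D_TV d (q t) (q (t-1)) * ln (real T / \<alpha>))"
  proof (intro sum.cong refl)
    fix t assume t: "t \<in> {2..T}"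
    show "(\<Sum>j<d. min (q t j) (q (t-1) j)) * c1 + (\<Sum>j<d. max (q t j - q (t-1) j) 0) * ln (real T / \<alpha>)
      = c1 - D_TV d (q t) (q (t-1)) * c1 + D_TV d (q t) (q (t-1)) * ln (real T / \<alpha>)"
      unfolding min_sum[OF t] D_TV_alt[of d "q t" "q (t-1)", symmetric] by (simp add: algebra_simps)
  qed
  also have "\<dots> = real (T - 1) * c1 - m_shift d T q * c1 + m_shift d T q * ln (real T / \<alpha>)"
    unfolding m_shift_def by (simp add: sum.distrib sum_subtractf sum_distrib_right)
  finally show ?thesis using T by (simp add: of_nat_diff algebra_simps)
qed

lemma regret_abs:
  "(\<Sum>t=1..T. \<Sum>j<d. p t j * l t j) - (\<Sum>t=1..T. \<Sum>j<d. q t j * l t j)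
         \<le> n_max d T q * ln (real d) / \<eta> + \<eta> / 8 * real T
           + m_shift d T q / \<eta> * ln (real T / \<alpha>)
           + (real T - m_shift d T q - 1) / \<eta> * ln (1 / (1 - \<alpha>))"
proof -
  define R where "R t = (\<Sum>j<d. q t j * (ln (v (Suc t) j) - ln (p t j)))" for t
  have "(\<Sum>t=1..T. \<Sum>j<d. p t j * l t j) - (\<Sum>t=1..T. \<Sum>j<d. q t j * l t j)
      = (\<Sum>t=1..T. (\<Sum>j<d. p t j * l t j) - (\<Sum>j<d. q t j * l t j))" by (simp add: sum_subtractf)
  also have "\<dots> \<le> (\<Sum>t=1..T. R t / \<eta> + \<eta> / 8)"
    unfolding R_def using round by (intro sum_mono) auto
  also have "\<dots> = (\<Sum>t=1..T. R t) / \<eta> + \<eta> / 8 * real T"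
    by (simp add: sum.distrib sum_divide_distrib)
  also have "(\<Sum>t=1..T. R t) / \<eta> \<le> (n_max d T q * ln (real d) + m_shift d T q * ln (real T / \<alpha>) + (real T - 1 - m_shift d T q) * c1) / \<eta>"
    using total_R eta unfolding R_def by (intro divide_right_mono) auto
  finally have F: "(\<Sum>t=1..T. \<Sum>j<d. p t j * l t j) - (\<Sum>t=1..T. \<Sum>j<d. q t j * l t j)
     \<le> (n_max d T q * ln (real d) + m_shift d T q * ln (real T / \<alpha>) + (real T - 1 - m_shift d T q) * c1) / \<eta> + \<eta> / 8 * real T"
    by simp
  have c: "ln (1 / (1 - \<alpha>)) = c1" unfolding c1_def using a1 by (simp add: ln_div)
  show ?thesis using F unfolding c by (simp add: add_divide_distrib diff_divide_distrib algebra_simps)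
qed

end

lemma gs_fst_Suc:
  "fst (gs_state d \<eta> psi l (Suc k)) = (fst (gs_state d \<eta> psi l k))(Suc (Suc k) :=
     (\<lambda>j. snd (gs_state d \<eta> psi l k) j * exp (- \<eta> * l (Suc k) j)
        / (\<Sum>i<d. snd (gs_state d \<eta> psi l k) i * exp (- \<eta> * l (Suc k) i))))"
  by (cases "gs_state d \<eta> psi l k") (simp add: Let_def)

lemma gs_snd_Suc:
  "snd (gs_state d \<eta> psi l (Suc k)) = psi (Suc (Suc k)) (fst (gs_state d \<eta> psi l (Suc k)))"
  by (cases "gs_state d \<eta> psi l k") (simp add: Let_def)

lemma gs_stable: "k \<le> k' \<Longrightarrow> s \<le> Suc k \<Longrightarrow> fst (gs_state d \<eta> psi l k') s = fst (gs_state d \<eta> psi l k) s"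
proof (induction k')
  case 0 thus ?case by simp
next
  case (Suc k')
  show ?case
  proof (cases "k = Suc k'")
    case True thus ?thesis by simp
  next
    case False
    hence "k \<le> k'" using Suc.prems by simp
    thus ?thesis using Suc by (simp add: gs_fst_Suc del: gs_state.simps(2))
  qed
qed

theorem mainTheorem10:
  fixes d T :: nat and \<eta> \<alpha> :: real and l q :: "nat \<Rightarrow> nat \<Rightarrow> real"
  assumes "d \<ge> 1" and "\<eta> > 0" and "0 < \<alpha>" and "\<alpha> < 1" and "T \<ge> 1"
    and "\<forall>t\<in>{1..T}. \<forall>j<d. 0 \<le> l t j \<and> l t j \<le> 1"
    and "\<forall>t\<in>{1..T}. prob_simplex d (q t)"
  shows "(\<Sum>t=1..T. \<Sum>j<d. gs_pred d \<eta> (share_max_mix d \<alpha>) l t j * l t j)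
           - (\<Sum>t=1..T. \<Sum>j<d. q t j * l t j)
         \<le> n_max d T q * ln (real d) / \<eta> + \<eta> / 8 * real T
           + m_shift d T q / \<eta> * ln (real T / \<alpha>)
           + (real T - m_shift d T q - 1) / \<eta> * ln (1 / (1 - \<alpha>))"
proof -
  define psi where "psi = share_max_mix d \<alpha>"
  define S where "S = gs_state d \<eta> psi l"
  define p where "p = gs_pred d \<eta> psi l"
  define v where "v = fst (S T)"
  have vS: "v s = fst (S k) s" if "k \<le> T" "s \<le> Suc k" for s k
    unfolding v_def S_def using gs_stable that by blast
  have pS: "p (Suc k) = snd (S k)" for k unfolding p_def S_def gs_pred_def by simp
  interpret gs_abs d T \<eta> \<alpha> l q p v
  proof (unfold_locales)
    show "\<forall>j. v 1 j = 1 / real d" using vS[of 0 1] by (simp add: S_def)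
    show "\<forall>j. p 1 j = 1 / real d" using pS[of 0] by (simp add: S_def)
    show "\<forall>t\<in>{1..T}. \<forall>j. v (Suc t) j = p t j * exp (- \<eta> * l t j) / (\<Sum>i<d. p t i * exp (- \<eta> * l t i))"
    proof (intro ballI allI)
      fix t j assume t: "t \<in> {1..T}"
      then obtain k where k: "t = Suc k" by (cases t) auto
      have "v (Suc t) = fst (S (Suc k)) (Suc (Suc k))" using vS[of t "Suc t"] t k by simp
      thus "v (Suc t) j = p t j * exp (- \<eta> * l t j) / (\<Sum>i<d. p t i * exp (- \<eta> * l t i))"
        unfolding S_def gs_fst_Suc k pS[unfolded S_def] by simp
    qed
    show "\<forall>t\<in>{2..T}. \<forall>j. p t j = (1 - \<alpha>) * v t j
        + \<alpha> * Max ((\<lambda>s. v s j) ` {1..t}) / (\<Sum>i<d. Max ((\<lambda>s. v s i) ` {1..t}))"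
    proof (intro ballI allI)
      fix t j assume t: "t \<in> {2..T}"
      then obtain k where k: "t = Suc (Suc k)" by (cases t; cases "t - 1") auto
      have eq: "fst (S (Suc k)) s = v s" if "s \<le> t" for s using vS[of "Suc k" s] that t k by simp
      have im: "(\<lambda>s. fst (S (Suc k)) s i) ` {1..t} = (\<lambda>s. v s i) ` {1..t}" for i
        using eq by (intro image_cong) auto
      have "p t j = psi t (fst (S (Suc k))) j" using pS[of "Suc k"] k by (simp add: S_def gs_snd_Suc del: gs_state.simps(2))
      thus "p t j = (1 - \<alpha>) * v t j
        + \<alpha> * Max ((\<lambda>s. v s j) ` {1..t}) / (\<Sum>i<d. Max ((\<lambda>s. v s i) ` {1..t}))"
        unfolding psi_def share_max_mix_def Let_def im using eq[of t] by simp
    qed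
  qed (use assms in auto)
  show ?thesis using regret_abs unfolding p_def psi_def .
qed

end
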